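(* Let $m,n\ge0$. (a) For $0\le k,k'\le\min(m,n)$ and any integer $p$ with $\max(k,k')\le p\le m+n-\max(k,k')$, $$\sum_{\substack{i+j=p\\0\le i\le m,\ 0\le j\le n}} c_{m,n,k}(i,j)\,c_{m,n,k'}(m-i,n-j)=(-1)^k\,\delta_{k,k'}\,D(m,n,k).$$ (b) For pairs $(i,j),(i',j')$ with $0\le i,i'\le m$, $0\le j,j'\le n$ and $i+j=i'+j'=p$, $$\sum_{\substack{0\le k\le\min(m,n)\\ k\le p\le m+n-k}}(-1)^k\,C_{m,n,k}(m-i,n-j)\,C_{m,n,k}(i',j')\,D(m,n,k)=\delta_{i,i'}\delta_{j,j'}.$$
   Context: $D(m,n,k)=\binom{m+n-k+1}{k}\binom{m+n-2k}{m-k}$. Let $e,f,h$ be the standard basis of $\mathfrak{sl}(2,\mathbb{C})$. $V(n)$ is the irreducible representation of highest weight $n$ with fixed highest weight vector $\phi_n$; $\{f^i\phi_n\}_{0\le i\le n}$ is a basis, $f^{n+1}\phi_n=0$. $\mathfrak{sl}(2)$ acts on $V(m)\otimes V(n)$ by $X(v\otimes w)=Xv\otimes w+v\otimes Xw$. For $0\le k\le\min(m,n)$, $\phi_{m,n,k}=\sum_{l=0}^{k}(-1)^l\binom{m-l}{k-l}\binom{n-k+l}{l} f^l\phi_m\otimes f^{k-l}\phi_n$; it is a highest weight vector of weight $m+n-2k$ generating a copy of $V(m+n-2k)$ with basis $f^a\phi_{m,n,k}$, $0\le a\le m+n-2k$, and $V(m)\otimes V(n)$ is the direct sum of these copies.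 The coordinates $c_{m,n,k}(i,j)$ are defined by $f^{p-k}\phi_{m,n,k}=\sum_{i+j=p,\,0\le i\le m,\,0\le j\le n} c_{m,n,k}(i,j)\, f^i\phi_m\otimes f^j\phi_n$ for $k\le p\le m+n-k$. The Clebsch–Gordan coefficients $C_{m,n,k}(i,j)$ are defined by $f^i\phi_m\otimes f^j\phi_n=\sum_{k} C_{m,n,k}(i,j)\, f^{i+j-k}\phi_{m,n,k}$, sum over $0\le k\le\min(m,n)$ with $k\le i+j\le m+n-k$. *)

theory Defs
  imports Complex_Main
begin

definition D :: "nat \<Rightarrow> nat \<Rightarrow> nat \<Rightarrow> nat" where
  "D m n k = ((m + n - k + 1) choose k) * ((m + n - 2*k) choose (m - k))"

text \<open>Vectors of V(m) (x) V(n) are represented by their coordinates w.r.t. the basis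
  f^i phi_m (x) f^j phi_n, 0 <= i <= m, 0 <= j <= n, as functions nat => nat => complex
  (zero outside the box).  The action of f on the tensor product:
  f(f^i phi_m (x) f^j phi_n) = f^(i+1) phi_m (x) f^j phi_n + f^i phi_m (x) f^(j+1) phi_n,
  with f^(m+1) phi_m = 0 and f^(n+1) phi_n = 0.\<close>
definition fop :: "nat \<Rightarrow> nat \<Rightarrow> (nat \<Rightarrow> nat \<Rightarrow> complex) \<Rightarrow> (nat \<Rightarrow> nat \<Rightarrow> complex)" where
  "fop m n v = (\<lambda>i j. if i \<le> m \<and> j \<le> n then
       (if 1 \<le> i then v (i - 1) j else 0) + (if 1 \<le> j then v i (j - 1) else 0)
     else 0)"

definition phi :: "nat \<Rightarrow> nat \<Rightarrow> nat \<Rightarrow> (nat \<Rightarrow> nat \<Rightarrow> complex)" where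
  "phi m n k = (\<lambda>a b. if a + b = k \<and> a \<le> m \<and> b \<le> n then
       (-1) ^ a * of_nat ((m - a) choose (k - a)) * of_nat ((n - k + a) choose a)
     else 0)"

definition fphi :: "nat \<Rightarrow> nat \<Rightarrow> nat \<Rightarrow> nat \<Rightarrow> (nat \<Rightarrow> nat \<Rightarrow> complex)" where
  "fphi m n k s = (fop m n ^^ s) (phi m n k)"

text \<open>Coordinates c_{m,n,k}(i,j): coefficient of f^i phi_m (x) f^j phi_n in
  f^(i+j-k) phi_{m,n,k} (meaningful for k <= i+j <= m+n-k).\<close>
definition c :: "nat \<Rightarrow> nat \<Rightarrow> nat \<Rightarrow> nat \<Rightarrow> nat \<Rightarrow> complex" where
  "c m n k i j = fphi m n k (i + j - k) i j"

definition Kset :: "nat \<Rightarrow> nat \<Rightarrow> nat \<Rightarrow> nat set" where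
  "Kset m n p = {k. k \<le> min m n \<and> k \<le> p \<and> p \<le> m + n - k}"

definition CGvec :: "nat \<Rightarrow> nat \<Rightarrow> nat \<Rightarrow> nat \<Rightarrow> (nat \<Rightarrow> complex)" where
  "CGvec m n i j = (THE g. (\<forall>k. k \<notin> Kset m n (i + j) \<longrightarrow> g k = 0) \<and>
      (\<lambda>a b. if a = i \<and> b = j then 1 else 0) =
      (\<lambda>a b. \<Sum>k\<in>Kset m n (i + j). g k * fphi m n k (i + j - k) a b))"

definition CG :: "nat \<Rightarrow> nat \<Rightarrow> nat \<Rightarrow> nat \<Rightarrow> nat \<Rightarrow> complex" where
  "CG m n k i j = CGvec m n i j k"

end

theory Submission imports Defs "HOL-Computational_Algebra.Formal_Power_Series" "Jordan_Normal_Form.Determinant" begin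


definition dsupp :: "nat \<Rightarrow> nat \<Rightarrow> nat \<Rightarrow> (nat \<Rightarrow> nat \<Rightarrow> complex) \<Rightarrow> bool" where
  "dsupp d m n v \<longleftrightarrow> (\<forall>i j. v i j \<noteq> 0 \<longrightarrow> i + j = d \<and> i \<le> m \<and> j \<le> n)"

lemma dsupp_fop: assumes "dsupp d m n v" shows "dsupp (Suc d) m n (fop m n v)"
  unfolding dsupp_def
proof (intro allI impI)
  fix i j assume "fop m n v i j \<noteq> 0"
  then have "i \<le> m \<and> j \<le> n" and "(1 \<le> i \<and> v (i-1) j \<noteq> 0) \<or> (1 \<le> j \<and> v i (j-1) \<noteq> 0)"
    by (auto simp: fop_def split: if_splits)
  then show "i + j = Suc d \<and> i \<le> m \<and> j \<le> n" using assms unfolding dsupp_def by fastforce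
qed

lemma dsupp_phi: "dsupp k m n (phi m n k)"
  unfolding dsupp_def phi_def by (auto split: if_splits)

lemma dsupp_fphi: "dsupp (k + s) m n (fphi m n k s)"
  unfolding fphi_def
  by (induction s) (auto simp: dsupp_phi dsupp_fop)

lemma fop_zero: "fop m n (\<lambda>i j. 0) = (\<lambda>i j. 0)"
  by (rule ext)+ (simp add: fop_def)

lemma fop_pow_zero: "(fop m n ^^ s) (\<lambda>i j. 0) = (\<lambda>i j. 0)"
  by (induction s) (auto simp: fop_zero)

lemma fop_scale: "fop m n (\<lambda>i j. a * v i j) = (\<lambda>i j. a * fop m n v i j)"
  by (rule ext)+ (simp add: fop_def algebra_simps)

lemma fop_pow_scale: "(fop m n ^^ s) (\<lambda>i j. a * v i j) = (\<lambda>i j. a * (fop m n ^^ s) v i j)"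
  by (induction s) (auto simp: fop_scale)

definition Mop :: "nat \<Rightarrow> nat \<Rightarrow> (nat \<Rightarrow> nat \<Rightarrow> complex) \<Rightarrow> (nat \<Rightarrow> nat \<Rightarrow> complex)" where
  "Mop m n v = (\<lambda>i j. if i \<le> m \<and> j \<le> n then
     of_nat (m - i) * (if 1 \<le> j then v i (j - 1) else 0)
      - of_nat (n - j) * (if 1 \<le> i then v (i - 1) j else 0) else 0)"

lemma fop_Mop:
  assumes "1 \<le> m" "1 \<le> n"
  shows "fop m n (Mop m n v) = Mop m n (fop (m - 1) (n - 1) v)"
proof (intro ext)
  fix i j
  show "fop m n (Mop m n v) i j = Mop m n (fop (m - 1) (n - 1) v) i j"
  proof (cases "i \<le> m \<and> j \<le> n")
    case False
    then show ?thesis by (auto simp: fop_def Mop_def)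
  next
    case True
    then obtain a b where ab: "m = i + a" "n = j + b"
      by (metis le_add_diff_inverse)
    show ?thesis using assms unfolding ab
      by (cases i; cases j; cases a; cases b) (auto simp: fop_def Mop_def algebra_simps)
  qed
qed


lemma fop_pow_Mop:
  assumes "1 \<le> m" "1 \<le> n"
  shows "(fop m n ^^ s) (Mop m n v) = Mop m n ((fop (m - 1) (n - 1) ^^ s) v)"
  by (induction s) (auto simp: fop_Mop[OF assms])

lemma absorb: "1 \<le> y \<Longrightarrow> x * ((x - 1) choose (y - 1)) = y * (x choose y)"
proof (cases x)
  case 0
  assume "1 \<le> y" then show ?thesis using 0 by auto
next
  case (Suc x')
  assume "1 \<le> y"
  then obtain y' where "y = Suc y'" by (cases y) auto
  then show ?thesis using Suc Suc_times_binomial_eq[of x' y'] by (simp add: mult.commute)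
qed

lemma phi_alt: "k \<le> n \<Longrightarrow> phi m n k = (\<lambda>a b. if a + b = k \<and> a \<le> m \<and> b \<le> n then
   (-1) ^ a * of_nat ((m - a) choose b) * of_nat ((n - b) choose a) else 0)"
proof (intro ext)
  fix a b assume kn: "k \<le> n"
  show "phi m n k a b = (if a + b = k \<and> a \<le> m \<and> b \<le> n then
   (-1) ^ a * of_nat ((m - a) choose b) * of_nat ((n - b) choose a) else 0)"
  proof (cases "a + b = k \<and> a \<le> m \<and> b \<le> n")
    case True
    then have "k - a = b" "n - k + a = n - b" using kn by auto
    then show ?thesis using True by (simp add: phi_def)
  qed (auto simp: phi_def)
qed

lemma phi_step:
  assumes "1 \<le> k" "k \<le> m" "k \<le> n"
  shows "of_nat k * phi m n k a b = Mop m n (phi (m - 1) (n - 1) (k - 1)) a b"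
proof (cases "a \<le> m \<and> b \<le> n \<and> a + b = k")
  case False
  then show ?thesis using assms by (auto simp: Mop_def phi_alt)
next
  case True
  then have box: "a \<le> m" "b \<le> n" "a + b = k" by auto
  show ?thesis
  proof (cases a)
    case 0
    then have b: "b = k" using box by simp
    have "m * ((m - 1) choose (k - 1)) = k * (m choose k)" using absorb assms by blast
    then have "(of_nat m :: complex) * of_nat ((m - 1) choose (k - 1)) = of_nat k * of_nat (m choose k)"
      by (metis of_nat_mult)
    then show ?thesis using 0 b assms by (auto simp: Mop_def phi_alt)
  next
    case (Suc a')
    show ?thesis
    proof (cases b)
      case 0
      then have a: "a = k" using box by simp
      have "n * ((n - 1) choose (k - 1)) = k * (n choose k)" using absorb assms by blast
      then have "(of_nat n :: complex) * of_nat ((n - 1) choose (k - 1)) = of_nat k * of_nat (n choose k)"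
        by (metis of_nat_mult)
      moreover have "a' = k - 1" using a Suc by simp
      moreover have "(-1::complex) ^ k = - ((-1) ^ (k - 1))" using assms by (cases k) auto
      ultimately show ?thesis using 0 a Suc assms by (auto simp: Mop_def phi_alt algebra_simps)
    next
      case (Suc b')
      note a = \<open>a = Suc a'\<close>
      have e1: "(m - a) * ((m - a - 1) choose (b - 1)) = b * ((m - a) choose b)"
        by (rule absorb) (simp add: Suc)
      have e2: "(n - b) * ((n - b - 1) choose (a - 1)) = a * ((n - b) choose a)"
        by (rule absorb) (simp add: a)
      have c1: "(of_nat (m - a) :: complex) * of_nat ((m - a - 1) choose (b - 1)) = of_nat b * of_nat ((m - a) choose b)"
        using e1 by (metis of_nat_mult)
      have c2: "(of_nat (n - b) :: complex) * of_nat ((n - b - 1) choose (a - 1)) = of_nat a * of_nat ((n - b) choose a)"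
        using e2 by (metis of_nat_mult)
      have i1: "m - 1 - a = m - a - 1" "n - 1 - b' = n - b" "m - 1 - a' = m - a" "n - 1 - b = n - b - 1"
        using a Suc box assms by auto
      have lhs: "Mop m n (phi (m - 1) (n - 1) (k - 1)) a b =
         of_nat (m - a) * ((-1) ^ a * of_nat ((m - a - 1) choose (b - 1)) * of_nat ((n - b) choose a))
         - of_nat (n - b) * ((-1) ^ a' * of_nat ((m - a) choose b) * of_nat ((n - b - 1) choose (a - 1)))"
        using a Suc box assms i1 by (simp add: Mop_def phi_alt box(3)[symmetric])
      have "(-1::complex) ^ a = - ((-1) ^ a')" using a by simp
      then have "Mop m n (phi (m - 1) (n - 1) (k - 1)) a b =
         (-1) ^ a * of_nat ((n - b) choose a) * (of_nat (m - a) * of_nat ((m - a - 1) choose (b - 1)))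
         + (-1) ^ a * of_nat ((m - a) choose b) * (of_nat (n - b) * of_nat ((n - b - 1) choose (a - 1)))"
        unfolding lhs by (simp add: algebra_simps)
      also have "\<dots> = (-1) ^ a * of_nat ((n - b) choose a) * of_nat ((m - a) choose b) * (of_nat a + of_nat b)"
        unfolding c1 c2 by (simp add: algebra_simps)
      finally have calc: "Mop m n (phi (m - 1) (n - 1) (k - 1)) a b = (-1) ^ a * of_nat ((n - b) choose a) * of_nat ((m - a) choose b) * (of_nat a + of_nat b)" .
      have ph: "phi m n k a b = (-1) ^ a * of_nat ((m - a) choose b) * of_nat ((n - b) choose a)"
        using box assms by (simp add: phi_alt[OF assms(3)])
      have kk: "(of_nat k :: complex) = of_nat a + of_nat b" unfolding box(3)[symmetric] by simp
      show ?thesis unfolding ph kk calc by (simp only: mult_ac)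
    qed
  qed
qed



lemma phi_step':
  assumes "1 \<le> k" "k \<le> m" "k \<le> n"
  shows "phi m n k = (\<lambda>i j. (1 / of_nat k) * Mop m n (phi (m - 1) (n - 1) (k - 1)) i j)"
proof (intro ext)
  fix i j
  have "of_nat k * phi m n k i j = Mop m n (phi (m - 1) (n - 1) (k - 1)) i j"
    by (rule phi_step[OF assms])
  moreover have "(of_nat k :: complex) \<noteq> 0" using assms by simp
  ultimately show "phi m n k i j = (1 / of_nat k) * Mop m n (phi (m - 1) (n - 1) (k - 1)) i j"
    by (simp add: field_simps)
qed

lemma fphi_step:
  assumes "1 \<le> k" "k \<le> m" "k \<le> n"
  shows "fphi m n k s = (\<lambda>i j. (1 / of_nat k) * Mop m n (fphi (m - 1) (n - 1) (k - 1) s) i j)"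
proof -
  have m1: "1 \<le> m" "1 \<le> n" using assms by auto
  show ?thesis
    unfolding fphi_def phi_step'[OF assms] fop_pow_scale fop_pow_Mop[OF m1] ..
qed

definition Bin :: "nat \<Rightarrow> nat \<Rightarrow> nat \<Rightarrow> (nat \<Rightarrow> nat \<Rightarrow> complex)" where
  "Bin m n s = (\<lambda>i j. if i + j = s \<and> i \<le> m \<and> j \<le> n then of_nat (s choose i) else 0)"

lemma fop_Bin: "fop m n (Bin m n s) = Bin m n (Suc s)"
proof (intro ext)
  fix i j
  show "fop m n (Bin m n s) i j = Bin m n (Suc s) i j"
  proof (cases "i + j = Suc s \<and> i \<le> m \<and> j \<le> n")
    case False
    then show ?thesis by (auto simp: fop_def Bin_def)
  next
    case True
    show ?thesis
    proof (cases i)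
      case 0
      then show ?thesis using True by (auto simp: fop_def Bin_def)
    next
      case (Suc i')
      then show ?thesis using True
        by (cases j) (auto simp: fop_def Bin_def)
    qed
  qed
qed

lemma fphi_zero: "fphi m n 0 s = Bin m n s"
proof -
  have "phi m n 0 = Bin m n 0" by (rule ext)+ (auto simp: phi_def Bin_def)
  then show ?thesis unfolding fphi_def by (induction s) (auto simp: fop_Bin)
qed


definition U :: "nat \<Rightarrow> nat \<Rightarrow> nat \<Rightarrow> (nat \<Rightarrow> nat \<Rightarrow> complex)" where
  "U m n k = (\<lambda>i j. if i + j = m + n - k \<and> m - k \<le> i \<and> i \<le> m \<and> j \<le> n
     then (-1) ^ (i + k - m) * of_nat ((m + n - 2 * k) choose (m - k)) else 0)"

lemma Mop_U:
  assumes "K \<le> M" "K \<le> N"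
  shows "Mop (Suc M) (Suc N) (U M N K) i j = of_nat (Suc K) * U (Suc M) (Suc N) (Suc K) i j"
proof -
  define B :: complex where "B = of_nat ((M + N - 2 * K) choose (M - K))"
  have BB: "of_nat ((Suc M + Suc N - 2 * Suc K) choose (Suc M - Suc K)) = B"
    unfolding B_def using assms by (simp add: numeral_2_eq_2)
  show ?thesis
  proof (cases "i + j = M + N + 1 - K \<and> i \<le> Suc M \<and> j \<le> Suc N \<and> M - K \<le> i")
    case False
    have r: "U (Suc M) (Suc N) (Suc K) i j = 0" using False assms by (simp add: U_def) blast
    have a1: "U M N K i (j - Suc 0) = 0" if "Suc 0 \<le> j" using False that assms unfolding U_def
      by (simp split: if_splits) linarith
    have a2: "U M N K (i - Suc 0) j = 0" if "Suc 0 \<le> i" using False that assms unfolding U_def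
      by (simp split: if_splits) linarith
    show ?thesis by (simp add: Mop_def r a1 a2)
  next
    case True
    then have ij: "i + j = M + N + 1 - K" "i \<le> Suc M" "j \<le> Suc N" "M - K \<le> i" by auto
    consider (lo) "i = M - K" | (mid) "M - K < i" "i \<le> M" | (hi) "i = Suc M"
      using ij by linarith
    then show ?thesis
    proof cases
      case lo
      then have j: "j = Suc N" using ij assms by linarith
      show ?thesis using lo j assms unfolding BB[symmetric] by (simp add: Mop_def U_def)
    next
      case mid
      then obtain i' where i': "i = Suc i'" by (cases i) auto
      have j: "j = M + N + 1 - K - i" "1 \<le> j" "j \<le> N" using ij mid assms by linarith+
      have sg: "(-1::complex) ^ (i + K - M) = - ((-1) ^ (i' + K - M))"
        using mid i' by (simp add: Suc_diff_le)
      have cf: "(of_nat (Suc M - i) :: complex) + of_nat (Suc N - j) = of_nat (Suc K)"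
      proof -
        have "Suc M - i + (Suc N - j) = Suc K" using ij mid j assms by linarith
        then show ?thesis by (metis of_nat_add)
      qed
      have "Mop (Suc M) (Suc N) (U M N K) i j =
          of_nat (Suc M - i) * ((-1) ^ (i + K - M) * B) - of_nat (Suc N - j) * ((-1) ^ (i' + K - M) * B)"
      proof -
        have c1: "i + (j - 1) = M + N - K" "M - K \<le> i" "i \<le> M" "j - 1 \<le> N"
          using mid j ij assms by linarith+
        have c2: "i' + j = M + N - K" "M - K \<le> i'" "i' \<le> M" "j \<le> N"
          using mid j ij assms i' by linarith+
        have u1: "U M N K i (j - 1) = (-1) ^ (i + K - M) * B"
          unfolding U_def B_def using c1 by simp
        have u2: "U M N K i' j = (-1) ^ (i' + K - M) * B"
          unfolding U_def B_def using c2 by simp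
        have "Mop (Suc M) (Suc N) (U M N K) i j = of_nat (Suc M - i) * U M N K i (j - 1)
            - of_nat (Suc N - j) * U M N K (i - 1) j"
          using ij j i' unfolding Mop_def by simp
        then show ?thesis unfolding u1 using i' u2 by simp
      qed
      also have "\<dots> = (of_nat (Suc M - i) + of_nat (Suc N - j)) * ((-1) ^ (i + K - M) * B)"
        unfolding sg by (simp add: algebra_simps)
      also have "\<dots> = of_nat (Suc K) * U (Suc M) (Suc N) (Suc K) i j"
        unfolding cf using ij mid j assms by (simp add: U_def BB B_def)
      finally show ?thesis .
    next
      case hi
      then have j: "j = N - K" using ij assms by linarith
      have sg: "(-1::complex) ^ (Suc M + Suc K - Suc M) = - ((-1) ^ (M + K - M))"
        by simp
      have "Mop (Suc M) (Suc N) (U M N K) i j = - (of_nat (Suc N - j) * ((-1) ^ (M + K - M) * B))"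
        using hi j assms by (simp add: Mop_def U_def B_def) linarith
      also have "\<dots> = of_nat (Suc K) * U (Suc M) (Suc N) (Suc K) i j"
        using hi j assms by (simp add: U_def BB B_def) linarith
      finally show ?thesis .
    qed
  qed
qed


lemma fphi_lam: "k \<le> m \<Longrightarrow> k \<le> n \<Longrightarrow> fphi m n k (m + n - 2 * k) = U m n k"
proof (induction k arbitrary: m n)
  case 0
  show ?case unfolding fphi_zero
  proof (intro ext)
    fix i j
    show "Bin m n (m + n - 2 * 0) i j = U m n 0 i j"
    proof (cases "i + j = m + n \<and> i \<le> m \<and> j \<le> n")
      case True
      then have "i = m" by linarith
      then show ?thesis using True \<open>i = m\<close> by (simp add: Bin_def U_def)
    next
      case False
      then show ?thesis by (auto simp: Bin_def U_def)
    qed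
  qed
next
  case (Suc k)
  obtain M N where MN: "m = Suc M" "n = Suc N" using Suc.prems by (cases m; cases n) auto
  have kk: "k \<le> M" "k \<le> N" using Suc.prems MN by auto
  have s: "m + n - 2 * Suc k = M + N - 2 * k" using MN by simp
  have "fphi m n (Suc k) (m + n - 2 * Suc k) =
      (\<lambda>i j. (1 / of_nat (Suc k)) * Mop m n (fphi M N k (M + N - 2 * k)) i j)"
    unfolding s using fphi_step[of "Suc k" m n "M + N - 2 * k"] Suc.prems MN by simp
  also have "\<dots> = U m n (Suc k)"
  proof (intro ext)
    fix i j
    have "Mop m n (fphi M N k (M + N - 2 * k)) i j = of_nat (Suc k) * U m n (Suc k) i j"
      unfolding Suc.IH[OF kk] MN by (rule Mop_U[OF kk])
    then show "(1 / of_nat (Suc k)) * Mop m n (fphi M N k (M + N - 2 * k)) i j = U m n (Suc k) i j"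
      by (simp del: of_nat_Suc)
  qed
  finally show ?case .
qed

lemma fop_U:
  assumes "k \<le> m" "k \<le> n"
  shows "fop m n (U m n k) = (\<lambda>i j. 0)"
proof (intro ext)
  fix i j
  show "fop m n (U m n k) i j = 0"
  proof (cases "i \<le> m \<and> j \<le> n \<and> i + j = m + n - k + 1")
    case False
    show ?thesis
    proof (cases "i \<le> m \<and> j \<le> n")
      case False
      then show ?thesis unfolding fop_def by auto
    next
      case box: True
      have a1: "U m n k i (j - Suc 0) = 0" if "Suc 0 \<le> j" using False box that assms unfolding U_def
        by (simp split: if_splits) linarith
      have a2: "U m n k (i - Suc 0) j = 0" if "Suc 0 \<le> i" using False box that assms unfolding U_def
        by (simp split: if_splits) linarith
      show ?thesis by (simp add: fop_def a1 a2)
    qed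
  next
    case True
    then have c: "1 \<le> i" "1 \<le> j" "m - k \<le> i - 1" "i + (j - 1) = m + n - k" "(i - 1) + j = m + n - k"
      using assms by linarith+
    obtain i' where i': "i = Suc i'" using c by (cases i) auto
    have "(-1::complex) ^ (i + k - m) = - ((-1) ^ (i' + k - m))"
      using c i' by (simp add: Suc_diff_le)
    then show ?thesis using True c i' by (simp add: fop_def U_def)
  qed
qed

lemma fphi_vanish:
  assumes "k \<le> m" "k \<le> n" "m + n - 2 * k < s"
  shows "fphi m n k s = (\<lambda>i j. 0)"
proof -
  obtain t where t: "s = Suc t + (m + n - 2 * k)" using assms(3) by (metis add_Suc less_iff_Suc_add add.commute)
  have "fphi m n k s = (fop m n ^^ t) (fop m n (fphi m n k (m + n - 2 * k)))"
    unfolding fphi_def t funpow_add by (simp add: funpow_swap1)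
  also have "\<dots> = (\<lambda>i j. 0)" unfolding fphi_lam[OF assms(1,2)] fop_U[OF assms(1,2)] fop_pow_zero ..
  finally show ?thesis .
qed



definition pr :: "nat \<Rightarrow> nat \<Rightarrow> (nat \<Rightarrow> nat \<Rightarrow> complex) \<Rightarrow> (nat \<Rightarrow> nat \<Rightarrow> complex) \<Rightarrow> complex" where
  "pr m n v w = (\<Sum>i\<le>m. \<Sum>j\<le>n. v i j * w (m - i) (n - j))"

lemma sum_shift1: "(\<Sum>i\<le>(m::nat). (if 1 \<le> i then g (i - 1) else 0)) = (\<Sum>i<m. g i :: 'a::comm_monoid_add)"
  by (induction m) (auto simp: lessThan_Suc add_ac)

lemma sum_cut: "(\<Sum>i\<le>(m::nat). (if i < m then g i else 0)) = (\<Sum>i<m. g i :: 'a::comm_monoid_add)"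
proof -
  have "(\<Sum>i\<le>m. (if i < m then g i else 0)) = (\<Sum>i\<in>insert m {..<m}. (if i < m then g i else 0))"
    by (simp add: lessThan_Suc_atMost[symmetric] lessThan_Suc)
  also have "\<dots> = (\<Sum>i<m. g i)" by simp
  finally show ?thesis .
qed

lemma pr_fop: "pr m n (fop m n v) w = pr m n v (fop m n w)"
proof -
  define A where "A = (\<lambda>i. \<Sum>j\<le>n. v i j * w (m - Suc i) (n - j))"
  define B where "B = (\<lambda>i j. v i j * w (m - i) (n - Suc j))"
  have "pr m n (fop m n v) w = (\<Sum>i\<le>m. (if 1 \<le> i then A (i - 1) else 0) + (\<Sum>j\<le>n. if 1 \<le> j then B i (j - 1) else 0))"
    unfolding pr_def
  proof (intro sum.cong refl)
    fix i assume i: "i \<in> {..m}"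
    have "(\<Sum>j\<le>n. fop m n v i j * w (m - i) (n - j)) =
       (\<Sum>j\<le>n. (if 1 \<le> i then v (i - 1) j * w (m - i) (n - j) else 0) + (if 1 \<le> j then B i (j - 1) else 0))"
      using i by (intro sum.cong refl) (auto simp: fop_def B_def algebra_simps)
    also have "\<dots> = (\<Sum>j\<le>n. (if 1 \<le> i then v (i - 1) j * w (m - i) (n - j) else 0)) + (\<Sum>j\<le>n. if 1 \<le> j then B i (j - 1) else 0)"
      by (rule sum.distrib)
    also have "(\<Sum>j\<le>n. (if 1 \<le> i then v (i - 1) j * w (m - i) (n - j) else 0)) = (if 1 \<le> i then A (i - 1) else 0)"
      by (auto simp: A_def)
    finally show "(\<Sum>j\<le>n. fop m n v i j * w (m - i) (n - j)) = (if 1 \<le> i then A (i - 1) else 0) + (\<Sum>j\<le>n. if 1 \<le> j then B i (j - 1) else 0)" .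
  qed
  also have "\<dots> = (\<Sum>i<m. A i) + (\<Sum>i\<le>m. \<Sum>j<n. B i j)"
    by (simp only: sum.distrib sum_shift1)
  finally have L: "pr m n (fop m n v) w = (\<Sum>i<m. A i) + (\<Sum>i\<le>m. \<Sum>j<n. B i j)" .
  have "pr m n v (fop m n w) = (\<Sum>i\<le>m. (if i < m then A i else 0) + (\<Sum>j\<le>n. if j < n then B i j else 0))"
    unfolding pr_def
  proof (intro sum.cong refl)
    fix i assume i: "i \<in> {..m}"
    have "(\<Sum>j\<le>n. v i j * fop m n w (m - i) (n - j)) =
       (\<Sum>j\<le>n. (if i < m then v i j * w (m - Suc i) (n - j) else 0) + (if j < n then B i j else 0))"
      using i by (intro sum.cong refl) (auto simp: fop_def B_def algebra_simps Suc_diff_Suc)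
    also have "\<dots> = (\<Sum>j\<le>n. (if i < m then v i j * w (m - Suc i) (n - j) else 0)) + (\<Sum>j\<le>n. if j < n then B i j else 0)"
      by (rule sum.distrib)
    also have "(\<Sum>j\<le>n. (if i < m then v i j * w (m - Suc i) (n - j) else 0)) = (if i < m then A i else 0)"
      by (auto simp: A_def)
    finally show "(\<Sum>j\<le>n. v i j * fop m n w (m - i) (n - j)) = (if i < m then A i else 0) + (\<Sum>j\<le>n. if j < n then B i j else 0)" .
  qed
  also have "\<dots> = (\<Sum>i<m. A i) + (\<Sum>i\<le>m. \<Sum>j<n. B i j)"
    by (simp only: sum.distrib sum_cut)
  finally show ?thesis using L by simp
qed

lemma pr_fop_pow: "pr m n ((fop m n ^^ a) v) ((fop m n ^^ b) w) = pr m n v ((fop m n ^^ (a + b)) w)"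
proof (induction a arbitrary: v b)
  case 0
  then show ?case by simp
next
  case (Suc a)
  have "pr m n ((fop m n ^^ Suc a) v) ((fop m n ^^ b) w) = pr m n ((fop m n ^^ a) (fop m n v)) ((fop m n ^^ b) w)"
    by (simp add: funpow_swap1)
  also have "\<dots> = pr m n (fop m n v) ((fop m n ^^ (a + b)) w)" by (rule Suc.IH)
  also have "\<dots> = pr m n v ((fop m n ^^ (Suc a + b)) w)" by (simp add: pr_fop)
  finally show ?case .
qed

lemma pr_fop_pow': "pr m n ((fop m n ^^ a) v) ((fop m n ^^ b) w) = pr m n ((fop m n ^^ (a + b)) v) w"
proof (induction b arbitrary: w a)
  case 0
  then show ?case by simp
next
  case (Suc b)
  have "pr m n ((fop m n ^^ a) v) ((fop m n ^^ Suc b) w) = pr m n ((fop m n ^^ a) v) ((fop m n ^^ b) (fop m n w))"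
    by (simp add: funpow_swap1)
  also have "\<dots> = pr m n ((fop m n ^^ (a + b)) v) (fop m n w)" by (rule Suc.IH)
  also have "\<dots> = pr m n ((fop m n ^^ (a + Suc b)) v) w" by (simp add: pr_fop)
  finally show ?case .
qed



lemma negbin: "(of_nat ((a + j) choose j) :: complex) = (-1) ^ j * ((- of_nat a - 1) gchoose j)"
proof -
  have "((- of_nat a - 1 :: complex) gchoose j) = (-1) ^ j * ((of_nat j - (- of_nat a - 1) - 1) gchoose j)"
    by (rule gbinomial_negated_upper)
  also have "of_nat j - (- of_nat a - 1) - 1 = (of_nat (a + j) :: complex)" by simp
  finally have "((- of_nat a - 1 :: complex) gchoose j) = (-1) ^ j * of_nat ((a + j) choose j)"
    by (simp add: binomial_gbinomial)
  then have "(-1) ^ j * ((- of_nat a - 1 :: complex) gchoose j) = ((-1) ^ j * (-1) ^ j) * of_nat ((a + j) choose j)"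
    by simp
  also have "(-1::complex) ^ j * (-1) ^ j = 1" by (simp add: power_mult_distrib[symmetric])
  finally show ?thesis by simp
qed

lemma upper_vandermonde:
  assumes "k \<le> m" "k \<le> n"
  shows "(\<Sum>i\<le>k. of_nat ((m - i) choose (k - i)) * of_nat ((n - k + i) choose i) :: complex)
     = of_nat ((m + n - k + 1) choose k)"
proof -
  define r where "r = m - k"
  define q where "q = n - k"
  have "(\<Sum>i\<le>k. of_nat ((m - i) choose (k - i)) * of_nat ((n - k + i) choose i) :: complex)
     = (\<Sum>i\<le>k. ((-1) ^ (k - i) * ((- of_nat r - 1) gchoose (k - i))) * ((-1) ^ i * ((- of_nat q - 1) gchoose i)))"
  proof (intro sum.cong refl)
    fix i assume "i \<in> {..k}"
    then have "m - i = r + (k - i)" "n - k + i = q + i" using assms by (auto simp: r_def q_def)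
    then show "of_nat ((m - i) choose (k - i)) * of_nat ((n - k + i) choose i) =
       ((-1) ^ (k - i) * ((- of_nat r - 1) gchoose (k - i))) * ((-1::complex) ^ i * ((- of_nat q - 1) gchoose i))"
      by (simp add: negbin)
  qed
  also have "\<dots> = (\<Sum>i\<in>{0..k}. (-1) ^ k * (((- of_nat q - 1) gchoose i) * ((- of_nat r - 1) gchoose (k - i))))"
  proof (intro sum.cong)
    show "{..k} = {0..k}" by auto
  next
    fix i assume "i \<in> {0..k}"
    then have "(-1::complex) ^ (k - i) * (-1) ^ i = (-1) ^ k"
      by (simp add: power_add[symmetric])
    then show "((-1) ^ (k - i) * ((- of_nat r - 1) gchoose (k - i))) * ((-1::complex) ^ i * ((- of_nat q - 1) gchoose i))
      = (-1) ^ k * (((- of_nat q - 1) gchoose i) * ((- of_nat r - 1) gchoose (k - i)))"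
      by (simp add: algebra_simps)
  qed
  also have "\<dots> = (-1) ^ k * ((- of_nat q - 1 + (- of_nat r - 1)) gchoose k)"
    by (simp add: sum_distrib_left[symmetric] gbinomial_Vandermonde)
  also have "(- of_nat q - 1 + (- of_nat r - 1) :: complex) = - of_nat (q + r + 1) - 1" by simp
  also have "(-1) ^ k * ((- of_nat (q + r + 1) - 1) gchoose k) = (-1) ^ k * ((-1) ^ k * (of_nat ((q + r + 1 + k) choose k) :: complex))"
  proof -
    have pp: "(-1::complex) ^ k * (-1) ^ k = 1" by (simp add: power_mult_distrib[symmetric])
    show ?thesis unfolding negbin[of "q + r + 1" k] mult.assoc[symmetric] pp by simp
  qed
  also have "\<dots> = of_nat ((q + r + 1 + k) choose k)" by (simp add: power_mult_distrib[symmetric])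
  also have "q + r + 1 + k = m + n - k + 1" using assms by (simp add: q_def r_def)
  finally show ?thesis .
qed


lemma pr_phi_U:
  assumes "k \<le> m" "k \<le> n"
  shows "pr m n (phi m n k) (U m n k) = (-1) ^ k * of_nat (D m n k)"
proof -
  define B :: complex where "B = of_nat ((m + n - 2 * k) choose (m - k))"
  define T where "T = (\<lambda>i. (-1) ^ k * B * (of_nat ((m - i) choose (k - i)) * of_nat ((n - k + i) choose i) :: complex))"
  have inner: "(\<Sum>j\<le>n. phi m n k i j * U m n k (m - i) (n - j)) = (if i \<le> k then T i else 0)"
    if i: "i \<le> m" for i
  proof -
    have "(\<Sum>j\<le>n. phi m n k i j * U m n k (m - i) (n - j)) = (\<Sum>j\<le>n. if j = k - i then (if i \<le> k then T i else 0) else 0)"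
    proof (intro sum.cong refl)
      fix j assume j: "j \<in> {..n}"
      show "phi m n k i j * U m n k (m - i) (n - j) = (if j = k - i then (if i \<le> k then T i else 0) else 0)"
      proof (cases "i + j = k")
        case False
        then have "phi m n k i j = 0" by (simp add: phi_def)
        then show ?thesis using False by auto
      next
        case True
        then have c: "i \<le> k" "j = k - i" by auto
        have ph: "phi m n k i j = (-1) ^ i * of_nat ((m - i) choose (k - i)) * of_nat ((n - k + i) choose i)"
          using True i j by (simp add: phi_def)
        have uu: "U m n k (m - i) (n - j) = (-1) ^ (k - i) * B"
        proof -
          have "m - i + (n - j) = m + n - k" "m - k \<le> m - i" "m - i + k - m = k - i"
            using True i j assms by auto
          then show ?thesis by (simp add: U_def B_def)
        qed
        have "(-1::complex) ^ i * (-1) ^ (k - i) = (-1) ^ k" using c by (simp add: power_add[symmetric])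
        then show ?thesis unfolding ph uu T_def using c by (simp add: algebra_simps)
      qed
    qed
    also have "\<dots> = (if i \<le> k then T i else 0)" using i assms by (simp add: sum.delta) linarith
    finally show ?thesis .
  qed
  have "pr m n (phi m n k) (U m n k) = (\<Sum>i\<le>m. if i \<le> k then T i else 0)"
    unfolding pr_def by (intro sum.cong refl) (simp add: inner)
  also have "\<dots> = (\<Sum>i\<le>k. if i \<le> k then T i else 0)"
    by (rule sum.mono_neutral_right) (use assms in auto)
  also have "\<dots> = (\<Sum>i\<le>k. T i)" by simp
  also have "\<dots> = (-1) ^ k * B * of_nat ((m + n - k + 1) choose k)"
    unfolding T_def sum_distrib_left[symmetric] upper_vandermonde[OF assms] ..
  also have "\<dots> = (-1) ^ k * of_nat (D m n k)" by (simp add: D_def B_def)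
  finally show ?thesis .
qed

lemma pr_zero_right: "pr m n v (\<lambda>i j. 0) = 0" by (simp add: pr_def)
lemma pr_zero_left: "pr m n (\<lambda>i j. 0) w = 0" by (simp add: pr_def)

lemma sum_c_pr:
  assumes "k \<le> p" "k' \<le> m + n - p" "p \<le> m + n"
  shows "(\<Sum>(i, j)\<in>{(i, j). i + j = p \<and> i \<le> m \<and> j \<le> n}. c m n k i j * c m n k' (m - i) (n - j))
     = pr m n (fphi m n k (p - k)) (fphi m n k' (m + n - p - k'))"
proof -
  let ?V = "fphi m n k (p - k)" and ?W = "fphi m n k' (m + n - p - k')"
  have supp: "?V i j = 0" if "i + j \<noteq> p" for i j
    using dsupp_fphi[of k "p - k" m n] that assms unfolding dsupp_def by auto
  have supp': "i + j = p" if "?V i j \<noteq> 0" for i j using supp that by blast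
  have "pr m n ?V ?W = (\<Sum>(i, j)\<in>{..m} \<times> {..n}. ?V i j * ?W (m - i) (n - j))"
    unfolding pr_def by (rule sum.cartesian_product)
  also have "\<dots> = (\<Sum>(i, j)\<in>{(i, j). i + j = p \<and> i \<le> m \<and> j \<le> n}. ?V i j * ?W (m - i) (n - j))"
    by (rule sum.mono_neutral_right) (auto dest: supp')
  also have "\<dots> = (\<Sum>(i, j)\<in>{(i, j). i + j = p \<and> i \<le> m \<and> j \<le> n}. c m n k i j * c m n k' (m - i) (n - j))"
  proof (intro sum.cong refl)
    fix x assume "x \<in> {(i, j). i + j = p \<and> i \<le> m \<and> j \<le> n}"
    then obtain i j where x: "x = (i, j)" "i + j = p" "i \<le> m" "j \<le> n" by auto
    then have "m - i + (n - j) - k' = m + n - p - k'" by auto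
    then show "(case x of (i, j) \<Rightarrow> ?V i j * ?W (m - i) (n - j)) = (case x of (i, j) \<Rightarrow> c m n k i j * c m n k' (m - i) (n - j))"
      using x(1,3,4) by (simp add: c_def x(2)[symmetric] add_ac)
  qed
  finally show ?thesis by simp
qed

lemma part_a:
  assumes "k \<le> min m n" "k' \<le> min m n" "max k k' \<le> p" "p \<le> m + n - max k k'"
  shows "(\<Sum>(i, j)\<in>{(i, j). i + j = p \<and> i \<le> m \<and> j \<le> n}. c m n k i j * c m n k' (m - i) (n - j))
     = (-1) ^ k * (if k = k' then 1 else 0) * of_nat (D m n k)"
proof -
  have a: "k \<le> p" "k' \<le> m + n - p" "p \<le> m + n" "k \<le> m" "k \<le> n" "k' \<le> m" "k' \<le> n"
    using assms by auto
  define N where "N = p - k + (m + n - p - k')"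
  have S: "(\<Sum>(i, j)\<in>{(i, j). i + j = p \<and> i \<le> m \<and> j \<le> n}. c m n k i j * c m n k' (m - i) (n - j))
     = pr m n (phi m n k) (fphi m n k' N)" "(\<Sum>(i, j)\<in>{(i, j). i + j = p \<and> i \<le> m \<and> j \<le> n}. c m n k i j * c m n k' (m - i) (n - j))
     = pr m n (fphi m n k N) (phi m n k')"
    unfolding sum_c_pr[OF a(1-3)] fphi_def N_def
    using pr_fop_pow[of m n "p - k" "phi m n k" "m + n - p - k'" "phi m n k'"]
      pr_fop_pow'[of m n "p - k" "phi m n k" "m + n - p - k'" "phi m n k'"] by simp_all
  consider "k < k'" | "k' < k" | "k = k'" by linarith
  then show ?thesis
  proof cases
    case 1
    have "fphi m n k' N = (\<lambda>i j. 0)" by (rule fphi_vanish) (use a 1 in \<open>auto simp: N_def\<close>)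
    then show ?thesis using 1 S(1) pr_zero_right by simp
  next
    case 2
    have "fphi m n k N = (\<lambda>i j. 0)" by (rule fphi_vanish) (use a 2 in \<open>auto simp: N_def\<close>)
    then show ?thesis using 2 S(2) pr_zero_left by simp
  next
    case 3
    have "N = m + n - 2 * k" using a 3 by (auto simp: N_def)
    then have "fphi m n k' N = U m n k" using 3 fphi_lam a by simp
    then show ?thesis using 3 S(1) pr_phi_U a by simp
  qed
qed



lemma left_right_inv:
  fixes M :: "'r \<Rightarrow> 'k \<Rightarrow> complex" and N :: "'k \<Rightarrow> 'r \<Rightarrow> complex"
  assumes fin: "finite R" "finite K" and cd: "card R = card K"
    and li: "\<And>k k'. k \<in> K \<Longrightarrow> k' \<in> K \<Longrightarrow> (\<Sum>r\<in>R. N k r * M r k') = (if k = k' then 1 else 0)"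
    and r: "r \<in> R" and r': "r' \<in> R"
  shows "(\<Sum>k\<in>K. M r k * N k r') = (if r = r' then 1 else 0)"
proof -
  define d where "d = card K"
  obtain f where f: "bij_betw f {0..<d} R" using ex_bij_betw_nat_finite[OF fin(1)] cd d_def by auto
  obtain g where g: "bij_betw g {0..<d} K" using ex_bij_betw_nat_finite[OF fin(2)] d_def by auto
  define A where "A = mat d d (\<lambda>(a, b). N (g a) (f b))"
  define B where "B = mat d d (\<lambda>(a, b). M (f a) (g b))"
  have A: "A \<in> carrier_mat d d" and B: "B \<in> carrier_mat d d" by (auto simp: A_def B_def)
  have AB: "A * B = 1\<^sub>m d"
  proof (rule eq_matI)
    fix a b assume ab: "a < dim_row (1\<^sub>m d)" "b < dim_col (1\<^sub>m d)"
    then have ab': "a < d" "b < d" by auto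
    have "(A * B) $$ (a, b) = (\<Sum>c\<in>{0..<d}. N (g a) (f c) * M (f c) (g b))"
      using ab' by (simp add: A_def B_def scalar_prod_def)
    also have "\<dots> = (\<Sum>r\<in>R. N (g a) r * M r (g b))"
      by (rule sum.reindex_bij_betw[OF f])
    also have "\<dots> = (if g a = g b then 1 else 0)"
      using li g ab' by (auto simp: bij_betw_def)
    also have "\<dots> = (if a = b then 1 else 0)"
      using g ab' by (auto simp: bij_betw_def inj_on_def)
    finally show "(A * B) $$ (a, b) = 1\<^sub>m d $$ (a, b)" using ab' by simp
  qed (auto simp: A_def B_def)
  have BA: "B * A = 1\<^sub>m d" by (rule mat_mult_left_right_inverse[OF A B AB])
  obtain a where a: "a < d" "f a = r" using f r by (auto simp: bij_betw_def)
  obtain b where b: "b < d" "f b = r'" using f r' by (auto simp: bij_betw_def)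
  have "(\<Sum>k\<in>K. M r k * N k r') = (\<Sum>c\<in>{0..<d}. M (f a) (g c) * N (g c) (f b))"
    unfolding a b by (rule sum.reindex_bij_betw[OF g, symmetric])
  also have "\<dots> = (B * A) $$ (a, b)"
    using a b by (simp add: A_def B_def scalar_prod_def)
  also have "\<dots> = (if a = b then 1 else 0)" unfolding BA using a b by simp
  also have "\<dots> = (if r = r' then 1 else 0)"
    using a b f by (auto simp: bij_betw_def inj_on_def)
  finally show ?thesis .
qed


lemma Kset_eq: "p \<le> m + n \<Longrightarrow> Kset m n p = {..min (min m n) (min p (m + n - p))}"
  unfolding Kset_def by auto

lemma Sp_eq:
  fixes m n p :: nat
  assumes "p \<le> m + n"
  shows "{(i, j). i + j = p \<and> i \<le> m \<and> j \<le> n} = (\<lambda>a. (a, p - a)) ` {p - min p n .. min m p}"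
proof (rule equalityI; rule subsetI)
  fix x assume "x \<in> {(i, j). i + j = p \<and> i \<le> m \<and> j \<le> n}"
  then obtain i j where x: "x = (i, j)" "i + j = p" "i \<le> m" "j \<le> n" by auto
  have "p - min p n \<le> i" using x by linarith
  moreover have "i \<le> min m p" using x by simp
  moreover have "x = (i, p - i)" using x by simp
  ultimately show "x \<in> (\<lambda>a. (a, p - a)) ` {p - min p n .. min m p}" by auto
next
  fix x assume "x \<in> (\<lambda>a. (a, p - a)) ` {p - min p n .. min m p}"
  then obtain a where a: "x = (a, p - a)" "p - min p n \<le> a" "a \<le> min m p" by auto
  then have "a \<le> m" "a \<le> p" by auto
  moreover have "p - a \<le> n" using a(2) by linarith
  ultimately show "x \<in> {(i, j). i + j = p \<and> i \<le> m \<and> j \<le> n}" using a(1) by auto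
qed

lemma card_Sp:
  fixes m n p :: nat
  assumes "p \<le> m + n"
  shows "card {(i, j). i + j = p \<and> i \<le> m \<and> j \<le> n} = card (Kset m n p)"
proof -
  have "inj_on (\<lambda>a::nat. (a, p - a)) {p - min p n .. min m p}" by (auto simp: inj_on_def)
  then have "card {(i, j). i + j = p \<and> i \<le> m \<and> j \<le> n} = Suc (min m p) - (p - min p n)"
    unfolding Sp_eq[OF assms] by (simp add: card_image)
  also have "\<dots> = Suc (min (min m n) (min p (m + n - p)))"
  proof -
    consider "p \<le> n" "p \<le> m" | "p \<le> n" "m < p" | "n < p" "p \<le> m" | "n < p" "m < p" by linarith
    then show ?thesis
    proof cases
      case 1
      then have "min m p = p" "min p n = p" "min (min m n) (min p (m + n - p)) = p" by (auto simp: min_def)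
      then show ?thesis by simp
    next
      case 2
      then have "min m p = m" "min p n = p" "min (min m n) (min p (m + n - p)) = m" using assms by (auto simp: min_def)
      then show ?thesis by simp
    next
      case 3
      then have "min m p = p" "min p n = n" "min (min m n) (min p (m + n - p)) = n" using assms by (auto simp: min_def)
      then show ?thesis using 3 by simp
    next
      case 4
      then have "min m p = m" "min p n = n" "min (min m n) (min p (m + n - p)) = m + n - p" using assms by (auto simp: min_def)
      then show ?thesis using 4 assms by simp
    qed
  qed
  finally show ?thesis unfolding Kset_eq[OF assms] by simp
qed

lemma finite_Sp: "finite {(i, j). i + j = p \<and> i \<le> (m::nat) \<and> j \<le> (n::nat)}"
  by (rule finite_subset[of _ "{..m} \<times> {..n}"]) auto

lemma D_pos: "k \<le> min m n \<Longrightarrow> D m n k \<noteq> 0"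
  unfolding D_def by auto


lemma c_fphi: "a + b = p \<Longrightarrow> c m n k a b = fphi m n k (p - k) a b"
  by (simp add: c_def)

lemma li_lemma:
  assumes p: "p \<le> m + n" and k: "k \<in> Kset m n p" and k': "k' \<in> Kset m n p"
  shows "(\<Sum>r\<in>{(i, j). i + j = p \<and> i \<le> m \<and> j \<le> n}.
      ((-1) ^ k * c m n k (m - fst r) (n - snd r) / of_nat (D m n k)) * c m n k' (fst r) (snd r))
    = (if k = k' then 1 else 0)"
proof -
  let ?R = "{(i, j). i + j = p \<and> i \<le> m \<and> j \<le> n}"
  have kk: "k' \<le> min m n" "k \<le> min m n" "max k' k \<le> p" "p \<le> m + n - max k' k"
    using k k' by (auto simp: Kset_def)
  have "(\<Sum>r\<in>?R. ((-1) ^ k * c m n k (m - fst r) (n - snd r) / of_nat (D m n k)) * c m n k' (fst r) (snd r))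
      = ((-1) ^ k / of_nat (D m n k)) * (\<Sum>(i, j)\<in>?R. c m n k' i j * c m n k (m - i) (n - j))"
    unfolding sum_distrib_left by (intro sum.cong refl) (auto simp: split_def)
  also have "\<dots> = ((-1) ^ k / of_nat (D m n k)) * ((-1) ^ k' * (if k' = k then 1 else 0) * of_nat (D m n k'))"
    by (subst part_a[OF kk]) simp
  also have "\<dots> = (if k = k' then 1 else 0)"
  proof (cases "k = k'")
    case True
    have "(of_nat (D m n k) :: complex) \<noteq> 0" using D_pos kk by simp
    moreover have "(-1::complex) ^ k * (-1) ^ k = 1" by (simp add: power_mult_distrib[symmetric])
    ultimately show ?thesis using True by (simp add: field_simps)
  qed simp
  finally show ?thesis .
qed

lemma CG_eq:
  assumes ij: "i \<le> m" "j \<le> n"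
  shows "CGvec m n i j = (\<lambda>k. if k \<in> Kset m n (i + j) then (-1) ^ k * c m n k (m - i) (n - j) / of_nat (D m n k) else 0)"
proof -
  define p where "p = i + j"
  have p: "p \<le> m + n" using ij p_def by simp
  define R where "R = {(i, j). i + j = p \<and> i \<le> m \<and> j \<le> n}"
  define Kc where "Kc = Kset m n p"
  define M' where "M' = (\<lambda>r k. c m n k (fst r) (snd r))"
  define N' where "N' = (\<lambda>k r. (-1) ^ k * c m n k (m - fst r) (n - snd r) / of_nat (D m n k))"
  define g where "g = (\<lambda>k. if k \<in> Kc then N' k (i, j) else 0)"
  have finR: "finite R" unfolding R_def by (rule finite_Sp)
  have finK: "finite Kc" unfolding Kc_def Kset_def by (rule finite_subset[of _ "{..m}"]) auto
  have cdRK: "card R = card Kc" unfolding R_def Kc_def by (rule card_Sp[OF p])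
  have li: "(\<Sum>r\<in>R. N' k r * M' r k') = (if k = k' then 1 else 0)" if "k \<in> Kc" "k' \<in> Kc" for k k'
    unfolding N'_def M'_def R_def using li_lemma[OF p] that unfolding Kc_def by blast
  have ri: "(\<Sum>k\<in>Kc. M' r k * N' k r') = (if r = r' then 1 else 0)" if "r \<in> R" "r' \<in> R" for r r'
    by (rule left_right_inv[OF finR finK cdRK li that]) auto
  have ijR: "(i, j) \<in> R" using ij by (simp add: R_def p_def)
  have Mf: "M' (a, b) k = fphi m n k (p - k) a b" if "a + b = p" for a b k
    using that by (simp add: M'_def c_def)
  have supp: "fphi m n k (p - k) a b = 0" if "k \<in> Kc" "(a, b) \<notin> R" for k a b
  proof -
    have "k \<le> p" using that by (simp add: Kc_def Kset_def)
    then show ?thesis using dsupp_fphi[of k "p - k" m n] that unfolding dsupp_def R_def by auto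
  qed
  let ?P = "\<lambda>g. (\<forall>k. k \<notin> Kset m n (i + j) \<longrightarrow> g k = 0) \<and>
      (\<lambda>a b. if a = i \<and> b = j then 1 else 0) =
      (\<lambda>a b. \<Sum>k\<in>Kset m n (i + j). g k * fphi m n k (i + j - k) a b)"
  have Pg: "?P g"
  proof (intro conjI allI impI ext)
    fix k assume "k \<notin> Kset m n (i + j)" then show "g k = 0" by (simp add: g_def Kc_def p_def)
  next
    fix a b
    show "(if a = i \<and> b = j then 1 else 0) = (\<Sum>k\<in>Kset m n (i + j). g k * fphi m n k (i + j - k) a b)"
    proof (cases "(a, b) \<in> R")
      case True
      then have ab: "a + b = p" by (simp add: R_def)
      have "(\<Sum>k\<in>Kset m n (i + j). g k * fphi m n k (i + j - k) a b) = (\<Sum>k\<in>Kc. M' (a, b) k * N' k (i, j))"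
        unfolding p_def[symmetric] Kc_def[symmetric] by (intro sum.cong refl) (simp add: g_def Mf[OF ab])
      also have "\<dots> = (if (a, b) = (i, j) then 1 else 0)" by (rule ri[OF True ijR])
      finally show ?thesis by simp
    next
      case False
      have "(\<Sum>k\<in>Kset m n (i + j). g k * fphi m n k (i + j - k) a b) = 0"
        unfolding p_def[symmetric] Kc_def[symmetric] by (intro sum.neutral) (simp add: supp[OF _ False])
      moreover have "\<not> (a = i \<and> b = j)" using False ijR by auto
      ultimately show ?thesis by simp
    qed
  qed
  have uniq: "g' = g" if "?P g'" for g'
  proof (rule ext)
    fix k
    show "g' k = g k"
    proof (cases "k \<in> Kc")
      case False
      then show ?thesis using that by (simp add: g_def Kc_def p_def)
    next
      case True
      have eq: "(if r = (i, j) then 1 else 0) = (\<Sum>k'\<in>Kc. g' k' * M' r k')" if r: "r \<in> R" for r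
      proof -
        obtain a b where rab: "r = (a, b)" by (cases r)
        have ab: "a + b = p" using r rab by (simp add: R_def)
        from fun_cong[OF fun_cong[OF conjunct2[OF \<open>?P g'\<close>], of a], of b]
        have "(if a = i \<and> b = j then 1 else 0) = (\<Sum>k\<in>Kc. g' k * fphi m n k (p - k) a b)"
          by (simp add: p_def Kc_def)
        then show ?thesis unfolding rab by (simp add: Mf[OF ab])
      qed
      have "g k = N' k (i, j)" using True by (simp add: g_def)
      also have "\<dots> = (\<Sum>r\<in>R. if r = (i, j) then N' k r else 0)"
        using ijR finR by (simp add: sum.delta)
      also have "\<dots> = (\<Sum>r\<in>R. N' k r * (if r = (i, j) then 1 else 0))"
        by (intro sum.cong refl) simp
      also have "\<dots> = (\<Sum>r\<in>R. N' k r * (\<Sum>k'\<in>Kc. g' k' * M' r k'))"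
        by (intro sum.cong refl) (simp add: eq)
      also have "\<dots> = (\<Sum>k'\<in>Kc. g' k' * (\<Sum>r\<in>R. N' k r * M' r k'))"
        by (simp add: sum_distrib_left sum_distrib_right sum.swap[of _ R] mult_ac)
      also have "\<dots> = (\<Sum>k'\<in>Kc. g' k' * (if k = k' then 1 else 0))"
        by (intro sum.cong refl) (simp add: li[OF True])
      also have "\<dots> = (\<Sum>k'\<in>Kc. if k' = k then g' k' else 0)"
        by (intro sum.cong refl) auto
      also have "\<dots> = g' k" using True finK by (simp add: sum.delta)
      finally show ?thesis by simp
    qed
  qed
  have "CGvec m n i j = g"
    unfolding CGvec_def by (rule the_equality[of ?P g, OF Pg uniq])
  then show ?thesis unfolding g_def N'_def Kc_def p_def fst_conv snd_conv .
qed


lemma Kset_sym: "p \<le> m + n \<Longrightarrow> Kset m n (m + n - p) = Kset m n p"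
  unfolding Kset_def by auto

lemma part_b:
  assumes "i \<le> m" "i' \<le> m" "j \<le> n" "j' \<le> n" "i + j = p" "i' + j' = p"
  shows "(\<Sum>k\<in>{k. k \<le> min m n \<and> k \<le> p \<and> p \<le> m + n - k}.
                (-1) ^ k * CG m n k (m - i) (n - j) * CG m n k i' j' * of_nat (D m n k))
            = (if i = i' \<and> j = j' then 1 else 0)"
proof -
  have p: "p \<le> m + n" using assms by simp
  let ?R = "{(i, j). i + j = p \<and> i \<le> m \<and> j \<le> n}"
  define M' where "M' = (\<lambda>r k. c m n k (fst r) (snd r))"
  define N' where "N' = (\<lambda>k r. (-1) ^ k * c m n k (m - fst r) (n - snd r) / of_nat (D m n k))"
  have finR: "finite ?R" by (rule finite_Sp)
  have finK: "finite (Kset m n p)" unfolding Kset_def by (rule finite_subset[of _ "{..m}"]) auto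
  have cdRK: "card ?R = card (Kset m n p)" by (rule card_Sp[OF p])
  have li: "(\<Sum>r\<in>?R. N' k r * M' r k') = (if k = k' then 1 else 0)" if "k \<in> Kset m n p" "k' \<in> Kset m n p" for k k'
    unfolding N'_def M'_def using li_lemma[OF p] that by blast
  have r1: "(i, j) \<in> ?R" "(i', j') \<in> ?R" using assms by auto
  have KS: "{k. k \<le> min m n \<and> k \<le> p \<and> p \<le> m + n - k} = Kset m n p" by (simp add: Kset_def)
  have ks2: "Kset m n (m - i + (n - j)) = Kset m n p"
  proof -
    have "m - i + (n - j) = m + n - p" using assms by simp
    then show ?thesis using Kset_sym[OF p] by simp
  qed
  have "(\<Sum>k\<in>{k. k \<le> min m n \<and> k \<le> p \<and> p \<le> m + n - k}.
                (-1) ^ k * CG m n k (m - i) (n - j) * CG m n k i' j' * of_nat (D m n k))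
      = (\<Sum>k\<in>Kset m n p. M' (i, j) k * N' k (i', j'))"
    unfolding KS
  proof (intro sum.cong refl)
    fix k assume k: "k \<in> Kset m n p"
    have Dn: "(of_nat (D m n k) :: complex) \<noteq> 0" using D_pos k by (simp add: Kset_def)
    have s3: "(-1::complex) ^ k * (-1) ^ k = 1" by (simp add: power_mult_distrib[symmetric])
    have c1: "CG m n k (m - i) (n - j) = (-1) ^ k * c m n k i j / of_nat (D m n k)"
      unfolding CG_def CG_eq[of "m - i" m "n - j" n, OF diff_le_self diff_le_self] ks2
      using k assms by simp
    have c2: "CG m n k i' j' = (-1) ^ k * c m n k (m - i') (n - j') / of_nat (D m n k)"
      unfolding CG_def CG_eq[OF assms(2,4)] using k assms by simp
    have "(-1) ^ k * CG m n k (m - i) (n - j) * CG m n k i' j' * of_nat (D m n k)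
        = ((-1) ^ k * (-1) ^ k) * c m n k i j * ((-1) ^ k * c m n k (m - i') (n - j') / of_nat (D m n k))
          * (of_nat (D m n k) / of_nat (D m n k))"
      unfolding c1 c2 by (simp add: field_simps)
    also have "\<dots> = M' (i, j) k * N' k (i', j')"
      unfolding s3 using Dn by (simp add: M'_def N'_def)
    finally show "(-1) ^ k * CG m n k (m - i) (n - j) * CG m n k i' j' * of_nat (D m n k) = M' (i, j) k * N' k (i', j')" .
  qed
  also have "\<dots> = (if (i, j) = (i', j') then 1 else 0)"
    by (rule left_right_inv[OF finR finK cdRK li r1]) auto
  finally show ?thesis by simp
qed

theorem corollary4p11:
  fixes m n :: nat
  shows "(\<forall>k k' p. k \<le> min m n \<longrightarrow> k' \<le> min m n \<longrightarrow>
            max k k' \<le> p \<longrightarrow> p \<le> m + n - max k k' \<longrightarrow>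
            (\<Sum>(i, j)\<in>{(i, j). i + j = p \<and> i \<le> m \<and> j \<le> n}.
                c m n k i j * c m n k' (m - i) (n - j))
            = (-1) ^ k * (if k = k' then 1 else 0) * of_nat (D m n k))
       \<and> (\<forall>i j i' j' p. i \<le> m \<longrightarrow> i' \<le> m \<longrightarrow> j \<le> n \<longrightarrow> j' \<le> n \<longrightarrow>
            i + j = p \<longrightarrow> i' + j' = p \<longrightarrow>
            (\<Sum>k\<in>{k. k \<le> min m n \<and> k \<le> p \<and> p \<le> m + n - k}.
                (-1) ^ k * CG m n k (m - i) (n - j) * CG m n k i' j' * of_nat (D m n k))
            = (if i = i' \<and> j = j' then 1 else 0))"
  using part_a part_b by blast

end
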